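(* Let $n\in\mathbb{N}$, $a<b$, and let $f:[a,b]\to\mathbb{R}$ be $2n$-convex. If $x_1=a$ and $x_2,\dots,x_{n+1}\in(a,b)$, then there exists a polynomial $p\in\Pi_{2n}$ such that $p(x_i)=f(x_i)$ for $i=1,\dots,n+1$ and $p(x)\le f(x)$ for all $x\in[a,b]$.
   Context: $\Pi_m$ denotes the set of real polynomials of degree at most $m$. Divided differences are defined recursively by $[x_1;f]:=f(x_1)$ and $[x_1,\dots,x_{m+1};f]:=\frac{[x_2,\dots,x_{m+1};f]-[x_1,\dots,x_m;f]}{x_{m+1}-x_1}$ for pairwise distinct points. For $m\in\mathbb{N}$, a function $f$ on an interval $I$ is called $m$-convex if $[x_1,\dots,x_{m+2};f]\ge 0$ for all pairwise distinct $x_1,\dots,x_{m+2}\in I$. *)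

theory Defs
  imports "HOL-Analysis.Analysis" "HOL-Computational_Algebra.Polynomial"
begin

fun divdiff :: "real list \<Rightarrow> (real \<Rightarrow> real) \<Rightarrow> real" where
  "divdiff [] f = 0"
| "divdiff [x] f = f x"
| "divdiff (x # y # ys) f =
     (divdiff (y # ys) f - divdiff (butlast (x # y # ys)) f) / (last (y # ys) - x)"

definition m_convex :: "nat \<Rightarrow> real set \<Rightarrow> (real \<Rightarrow> real) \<Rightarrow> bool" where
  "m_convex m I f \<longleftrightarrow>
     (\<forall>xs. length xs = m + 2 \<longrightarrow> distinct xs \<longrightarrow> set xs \<subseteq> I \<longrightarrow> divdiff xs f \<ge> 0)"

end

theory Submission
  imports Defs
begin


definition wt :: "real set \<Rightarrow> real \<Rightarrow> real" where
  "wt S u = (\<Prod>v\<in>S-{u}. (u - v))"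

definition DF :: "(real \<Rightarrow> real) \<Rightarrow> real set \<Rightarrow> real" where
  "DF f S = (\<Sum>u\<in>S. f u / wt S u)"

lemma wt_nz: "finite S \<Longrightarrow> wt S u \<noteq> 0"
  unfolding wt_def by (auto simp: prod_zero_iff)

lemma wt_insert_other: "finite S \<Longrightarrow> z \<notin> S \<Longrightarrow> u \<in> S \<Longrightarrow> wt (insert z S) u = (u - z) * wt S u"
proof -
  assume a: "finite S" "z \<notin> S" "u \<in> S"
  have "insert z S - {u} = insert z (S - {u})" using a by auto
  thus ?thesis using a unfolding wt_def by (simp add: prod.insert)
qed

lemma wt_insert_self: "finite S \<Longrightarrow> z \<notin> S \<Longrightarrow> wt (insert z S) z = (\<Prod>v\<in>S. z - v)"
  unfolding wt_def by (metis Diff_insert_absorb)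

lemma aux3: fixes p q a f :: real assumes "p \<noteq> 0" "q \<noteq> 0" "a \<noteq> 0"
  shows "f/(p*a) - f/(q*a) = (q - p)*(f/(q*(p*a)))"
proof -
  have e1: "f/(p*a) = (q*f)/(q*(p*a))" using assms by simp
  have e2: "f/(q*a) = (p*f)/(q*(p*a))" using assms by simp
  have "f/(p*a) - f/(q*a) = (q*f - p*f)/(q*(p*a))" unfolding e1 e2 by (rule diff_divide_distrib[symmetric])
  also have "\<dots> = (q - p)*(f/(q*(p*a)))" by (simp add: left_diff_distrib)
  finally show ?thesis .
qed
lemma aux2: "(a::real) \<noteq> 0 \<Longrightarrow> u \<noteq> x \<Longrightarrow> u \<noteq> l \<Longrightarrow> f/((u-l)*a) - f/((u-x)*a) = (l-x)*(f/((u-x)*((u-l)*a)))"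
  using aux3[of "u-l" "u-x" a f] by simp
lemma aux_alg:
  fixes A B X Y S1 S2 S3 l x :: real
  assumes "S1 - S2 = (l - x) * S3" "x \<noteq> l"
  shows "(A / B + S1 - (X / Y + S2)) / (l - x) = X / ((x - l) * Y) + (A / ((l - x) * B) + S3)"
proof -
  have h: "l - x \<noteq> 0" using assms by simp
  have "A / B + S1 - (X / Y + S2) = (A / B - X / Y) + (l - x) * S3" using assms(1) by simp
  hence "(A / B + S1 - (X / Y + S2)) / (l - x) = (A / B - X / Y) / (l - x) + (l - x) * S3 / (l - x)"
    by (metis add_divide_distrib)
  also have "(l - x) * S3 / (l - x) = S3" using h by simp
  also have "(A / B - X / Y) / (l - x) = A / ((l - x) * B) + X / ((x - l) * Y)"
  proof -
    have e: "x - l = - (l - x)" by simp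
    have "(A / B - X / Y) / (l - x) = A / B / (l - x) - X / Y / (l - x)" by (rule diff_divide_distrib)
    also have "\<dots> = A / ((l - x) * B) + X / ((x - l) * Y)"
    proof -
      have "X / ((x - l) * Y) = - (X / ((l - x) * Y))" unfolding e by (metis minus_divide_right mult_minus_left)
      thus ?thesis by (simp add: mult.commute)
    qed
    finally show ?thesis .
  qed
  finally show ?thesis by simp
qed

lemma DF_step:
  assumes C: "finite C" "x \<notin> C" "l \<notin> C" "x \<noteq> l"
  shows "(DF f (insert l C) - DF f (insert x C)) / (l - x) = DF f (insert x (insert l C))"
proof -
  define Px where "Px = (\<Prod>v\<in>C. x - v)"
  define Pl where "Pl = (\<Prod>v\<in>C. l - v)"
  have Pxnz: "Px \<noteq> 0" unfolding Px_def using C by (auto simp: prod_zero_iff)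
  have Plnz: "Pl \<noteq> 0" unfolding Pl_def using C by (auto simp: prod_zero_iff)
  have wnz: "\<And>u. wt C u \<noteq> 0" using wt_nz C by blast
  have d1: "DF f (insert l C) = f l / Pl + (\<Sum>u\<in>C. f u / ((u - l) * wt C u))"
    unfolding DF_def using C
    by (simp add: wt_insert_self wt_insert_other Pl_def cong: sum.cong)
  have d2: "DF f (insert x C) = f x / Px + (\<Sum>u\<in>C. f u / ((u - x) * wt C u))"
    unfolding DF_def using C
    by (simp add: wt_insert_self wt_insert_other Px_def cong: sum.cong)
  have wl: "wt (insert x (insert l C)) l = (l - x) * Pl"
    using C by (simp add: wt_insert_other wt_insert_self Pl_def)
  have wx: "wt (insert x (insert l C)) x = (x - l) * Px"
    using C by (simp add: wt_insert_self Px_def prod.insert)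
  have wu: "\<And>u. u \<in> C \<Longrightarrow> wt (insert x (insert l C)) u = (u - x) * ((u - l) * wt C u)"
    using C by (simp add: wt_insert_other)
  have d3: "DF f (insert x (insert l C)) = f x / ((x - l) * Px) + (f l / ((l - x) * Pl)
      + (\<Sum>u\<in>C. f u / ((u - x) * ((u - l) * wt C u))))"
    unfolding DF_def using C wl wx wu by (simp add: sum.insert cong: sum.cong)
  have s: "(\<Sum>u\<in>C. f u / ((u - l) * wt C u)) - (\<Sum>u\<in>C. f u / ((u - x) * wt C u))
      = (l - x) * (\<Sum>u\<in>C. f u / ((u - x) * ((u - l) * wt C u)))"
    unfolding sum_subtractf[symmetric] sum_distrib_left
  proof (rule sum.cong[OF refl])
    fix u assume "u \<in> C"
    hence h: "u \<noteq> x" "u \<noteq> l" using C by auto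
    show "f u / ((u - l) * wt C u) - f u / ((u - x) * wt C u) = (l - x) * (f u / ((u - x) * ((u - l) * wt C u)))"
      by (rule aux2[OF wnz[of u] h])
  qed
  show ?thesis unfolding d1 d2 d3 using aux_alg[OF s C(4)] .
qed

lemma divdiff_DF: "distinct L \<Longrightarrow> L \<noteq> [] \<Longrightarrow> divdiff L f = DF f (set L)"
proof (induction L f rule: divdiff.induct)
  case (1 f) thus ?case by simp
next
  case (2 x f) thus ?case by (simp add: DF_def wt_def)
next
  case (3 x y ys f)
  define l where "l = last (y # ys)"
  define C where "C = set (butlast (y # ys))"
  have yl: "y # ys = butlast (y # ys) @ [l]" unfolding l_def by (rule append_butlast_last_id[symmetric]) simp
  have dy: "distinct (y # ys)" using 3(3) by simp
  have dyl: "distinct (butlast (y # ys) @ [l])" using dy by (simp only: yl[symmetric])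
  have lC: "l \<notin> C" using dyl unfolding C_def by simp
  have xs: "x \<notin> set (y # ys)" using 3(3) by simp
  have lin: "l \<in> set (y # ys)" unfolding l_def by (rule last_in_set) simp
  have xC1: "x \<notin> C" using xs unfolding C_def by (metis in_set_butlastD)
  have xC2: "x \<noteq> l" using xs lin by metis
  have sA: "set (y # ys) = insert l C"
  proof -
    have "set (y # ys) = set (butlast (y # ys) @ [l])" by (simp only: yl[symmetric])
    thus ?thesis unfolding C_def by simp
  qed
  have sB: "set (butlast (x # y # ys)) = insert x C" unfolding C_def by simp
  have h1: "divdiff (y # ys) f = DF f (insert l C)" using 3(1) dy sA by simp
  have dB: "distinct (butlast (x # y # ys))" using 3(3) by (rule distinct_butlast)
  have h2: "divdiff (butlast (x # y # ys)) f = DF f (insert x C)"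
    using 3(2) dB sB by simp
  have "divdiff (x # y # ys) f = (DF f (insert l C) - DF f (insert x C)) / (l - x)"
    by (simp only: divdiff.simps(3) h1 h2 l_def[symmetric])
  also have "\<dots> = DF f (insert x (insert l C))"
    by (rule DF_step[OF _ xC1 lC xC2]) (simp add: C_def)
  also have "insert x (insert l C) = set (x # y # ys)" using sA by simp
  finally show ?case .
qed

lemma convex_DF:
  assumes "m_convex m I f" "finite S" "card S = m + 2" "S \<subseteq> I"
  shows "DF f S \<ge> 0"
proof -
  let ?L = "sorted_list_of_set S"
  have "divdiff ?L f \<ge> 0" using assms unfolding m_convex_def by auto
  moreover have "?L \<noteq> []" using assms by auto
  ultimately show ?thesis using divdiff_DF[of ?L f] assms by simp
qed



definition lag :: "real set \<Rightarrow> (real \<Rightarrow> real) \<Rightarrow> real poly" where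
  "lag Z f = (\<Sum>u\<in>Z. smult (f u / wt Z u) (\<Prod>v\<in>Z-{u}. [:-v, 1:]))"

lemma poly_lag: "poly (lag Z f) t = (\<Sum>u\<in>Z. f u / wt Z u * (\<Prod>v\<in>Z-{u}. t - v))"
  by (simp add: lag_def poly_sum poly_prod)

lemma degree_lag: assumes "finite Z" shows "degree (lag Z f) \<le> card Z - 1"
  unfolding lag_def
proof (rule degree_sum_le[OF assms])
  fix u assume u: "u \<in> Z"
  have "degree (smult (f u / wt Z u) (\<Prod>v\<in>Z-{u}. [:-v, 1:])) \<le> degree (\<Prod>v\<in>Z-{u}. [:-v, 1:])"
    by (rule degree_smult_le)
  also have "\<dots> \<le> sum (degree \<circ> (\<lambda>v. [:-v, 1:])) (Z - {u})"
    by (rule degree_prod_sum_le) (use assms in simp)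
  also have "\<dots> = card (Z - {u})" by simp
  also have "\<dots> = card Z - 1" using u assms by simp
  finally show "degree (smult (f u / wt Z u) (\<Prod>v\<in>Z-{u}. [:-v, 1:])) \<le> card Z - 1" .
qed

lemma lag_interp: assumes "finite Z" "z \<in> Z" shows "poly (lag Z f) z = f z"
proof -
  have "poly (lag Z f) z = f z / wt Z z * (\<Prod>v\<in>Z-{z}. z - v) + (\<Sum>u\<in>Z-{z}. f u / wt Z u * (\<Prod>v\<in>Z-{u}. z - v))"
    unfolding poly_lag using assms by (simp add: sum.remove)
  also have "(\<Sum>u\<in>Z-{z}. f u / wt Z u * (\<Prod>v\<in>Z-{u}. z - v)) = 0"
  proof (rule sum.neutral, intro ballI)
    fix u assume "u \<in> Z - {z}"
    hence "z \<in> Z - {u}" using assms by auto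
    hence "(\<Prod>v\<in>Z-{u}. z - v) = 0" using assms by (auto simp: prod_zero_iff)
    thus "f u / wt Z u * (\<Prod>v\<in>Z-{u}. z - v) = 0" by simp
  qed
  also have "(\<Prod>v\<in>Z-{z}. z - v) = wt Z z" unfolding wt_def ..
  finally show ?thesis using wt_nz[OF assms(1), of z] by simp
qed

lemma aux5: fixes f w Q d :: real assumes "d \<noteq> 0" "w \<noteq> 0"
  shows "f / (d * w) * ((- d) * Q) = - (f / w * Q)"
  using assms by (simp add: field_simps)

lemma aux4: fixes f w Q t u :: real assumes "u \<noteq> t" "w \<noteq> 0"
  shows "f / ((u - t) * w) * ((t - u) * Q) = - (f / w * Q)"
proof -
  have n: "u - t \<noteq> 0" using assms by simp
  have "f / ((u - t) * w) * ((- (u - t)) * Q) = - (f / w * Q)" by (rule aux5[OF n assms(2)])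
  thus ?thesis by simp
qed

lemma lag_error:
  assumes Z: "finite Z" "t \<notin> Z"
  shows "f t - poly (lag Z f) t = DF f (insert t Z) * (\<Prod>v\<in>Z. t - v)"
proof -
  define P where "P = (\<Prod>v\<in>Z. t - v)"
  have Pnz: "P \<noteq> 0" unfolding P_def using Z by (auto simp: prod_zero_iff)
  have d: "DF f (insert t Z) = f t / P + (\<Sum>u\<in>Z. f u / ((u - t) * wt Z u))"
    unfolding DF_def using Z by (simp add: wt_insert_self wt_insert_other P_def cong: sum.cong)
  have "DF f (insert t Z) * P = f t + (\<Sum>u\<in>Z. f u / ((u - t) * wt Z u) * P)"
    unfolding d using Pnz by (simp add: distrib_right sum_distrib_right)
  also have "(\<Sum>u\<in>Z. f u / ((u - t) * wt Z u) * P) = (\<Sum>u\<in>Z. - (f u / wt Z u * (\<Prod>v\<in>Z-{u}. t - v)))"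
  proof (rule sum.cong[OF refl])
    fix u assume u: "u \<in> Z"
    have "P = (t - u) * (\<Prod>v\<in>Z-{u}. t - v)" unfolding P_def using Z u by (simp add: prod.remove)
    moreover have "u \<noteq> t" using u Z by auto
    ultimately show "f u / ((u - t) * wt Z u) * P = - (f u / wt Z u * (\<Prod>v\<in>Z-{u}. t - v))"
      using aux4 wt_nz[OF Z(1)] by simp
  qed
  also have "\<dots> = - poly (lag Z f) t" unfolding poly_lag by (simp add: sum_negf)
  finally show ?thesis unfolding P_def by simp
qed



lemma poly_sum_N: fixes p :: "real poly" assumes "degree p \<le> N"
  shows "poly p t = (\<Sum>i\<le>N. coeff p i * t ^ i)"
proof -
  have "poly p t = (\<Sum>i\<le>degree p. coeff p i * t ^ i)" by (rule poly_altdef)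
  also have "\<dots> = (\<Sum>i\<le>N. coeff p i * t ^ i)"
    by (rule sum.mono_neutral_left) (use assms in \<open>auto simp: coeff_eq_0\<close>)
  finally show ?thesis .
qed

lemma extract_sub:
  fixes c :: "nat \<Rightarrow> nat \<Rightarrow> real"
  assumes "\<And>k i. \<bar>c k i\<bar> \<le> B"
  shows "\<exists>r l. strict_mono r \<and> (\<forall>i<m. (\<lambda>k. c (r k) i) \<longlonglongrightarrow> l i)"
proof (induction m)
  case 0
  have "strict_mono (id :: nat \<Rightarrow> nat)" by (simp add: strict_mono_def)
  thus ?case by blast
next
  case (Suc m)
  then obtain r l where r: "strict_mono r" "\<forall>i<m. (\<lambda>k. c (r k) i) \<longlonglongrightarrow> l i" by blast
  have "bounded (range (\<lambda>k. c (r k) m))"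
    unfolding bounded_iff using assms by auto
  then obtain l' s where s: "strict_mono s" "((\<lambda>k. c (r k) m) \<circ> s) \<longlonglongrightarrow> l'"
    using bounded_imp_convergent_subsequence by blast
  have "strict_mono (r \<circ> s)" using r(1) s(1) by (rule strict_mono_o)
  moreover have "\<forall>i<Suc m. (\<lambda>k. c ((r \<circ> s) k) i) \<longlonglongrightarrow> (l(m := l')) i"
  proof (intro allI impI)
    fix i assume i: "i < Suc m"
    show "(\<lambda>k. c ((r \<circ> s) k) i) \<longlonglongrightarrow> (l(m := l')) i"
    proof (cases "i = m")
      case True thus ?thesis using s(2) by (simp add: o_def)
    next
      case False
      hence "i < m" using i by simp
      hence "((\<lambda>k. c (r k) i) \<circ> s) \<longlonglongrightarrow> l i" using r(2) s(1) LIMSEQ_subseq_LIMSEQ by blast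
      thus ?thesis using False by (simp add: o_def)
    qed
  qed
  ultimately show ?case by blast
qed

definition polyN :: "nat \<Rightarrow> (nat \<Rightarrow> real) \<Rightarrow> real poly" where
  "polyN N l = (\<Sum>i\<le>N. monom (l i) i)"

lemma degree_polyN: "degree (polyN N l) \<le> N"
  unfolding polyN_def by (rule degree_sum_le) (auto intro: order.trans[OF degree_monom_le])

lemma coeff_polyN: "i \<le> N \<Longrightarrow> coeff (polyN N l) i = l i"
  unfolding polyN_def by (simp add: coeff_sum coeff_monom)

lemma poly_polyN: "poly (polyN N l) t = (\<Sum>i\<le>N. l i * t ^ i)"
  unfolding polyN_def by (simp add: poly_sum poly_monom)

lemma lim_poly:
  fixes P :: "nat \<Rightarrow> real poly"
  assumes "\<And>k. degree (P k) \<le> N" "\<And>i. i \<le> N \<Longrightarrow> (\<lambda>k. coeff (P k) i) \<longlonglongrightarrow> l i"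
  shows "(\<lambda>k. poly (P k) t) \<longlonglongrightarrow> poly (polyN N l) t"
proof -
  have e: "(\<lambda>k. poly (P k) t) = (\<lambda>k. \<Sum>i\<le>N. coeff (P k) i * t ^ i)"
    using poly_sum_N[OF assms(1)] by auto
  show ?thesis unfolding e poly_polyN
    by (intro tendsto_sum tendsto_mult_right) (use assms(2) in auto)
qed

lemma limit_poly:
  fixes P :: "nat \<Rightarrow> real poly" and f :: "real \<Rightarrow> real"
  assumes deg: "\<And>k. degree (P k) \<le> N"
    and eq: "\<And>k z. z \<in> Z0 \<Longrightarrow> poly (P k) z = f z"
    and le: "\<And>t. t \<in> T \<Longrightarrow> eventually (\<lambda>k. poly (P k) t \<le> f t) sequentially"
    and uniq: "\<And>q. degree q \<le> N \<Longrightarrow> (\<forall>z\<in>Z0. poly q z = 0) \<Longrightarrow> (\<forall>t\<in>T. poly q t \<le> 0) \<Longrightarrow> q = 0"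
  shows "\<exists>q. degree q \<le> N \<and> (\<forall>z\<in>Z0. poly q z = f z) \<and> (\<forall>t\<in>T. poly q t \<le> f t)"
proof -
  define M where "M k = (\<Sum>i\<le>N. \<bar>coeff (P k) i\<bar>)" for k
  have Mge: "\<bar>coeff (P k) i\<bar> \<le> M k" if "i \<le> N" for k i
    unfolding M_def by (rule member_le_sum) (use that in auto)
  have coeff0: "coeff (P k) i = 0" if "N < i" for k i
    using deg[of k] that by (simp add: coeff_eq_0)
  have bnd: "\<exists>B. \<forall>k. M k \<le> B"
  proof (rule ccontr)
    assume nb: "\<not> (\<exists>B. \<forall>k. M k \<le> B)"
    have big: "\<exists>k>K. B < M k" for B K
    proof -
      define B' where "B' = max B (Max (M ` {..K}))"
      obtain k where k: "B' < M k" using nb by (meson not_le)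
      have "k > K"
      proof (rule ccontr)
        assume "\<not> K < k"
        hence "k \<in> {..K}" by simp
        thus False using k unfolding B'_def by auto
      qed
      thus ?thesis using k unfolding B'_def by auto
    qed
    obtain r where r: "\<forall>j. real j < M (r j) \<and> r j < r (Suc j)"
    proof -
      have "\<exists>r. \<forall>j. real j < M (r j) \<and> r j < r (Suc j)"
      proof (rule dependent_nat_choice[where P="\<lambda>j k. real j < M k" and Q="\<lambda>j k k'. k < k'"])
        show "\<exists>x. real 0 < M x" using big[of 0 0] by auto
        fix x j assume "real j < M x"
        show "\<exists>y. real (Suc j) < M y \<and> x < y" using big[of x "real (Suc j)"] by auto
      qed
      thus ?thesis using that by blast
    qed
    have rmono: "strict_mono r" using r by (simp add: strict_mono_Suc_iff)
    have Mpos: "M (r j) > 0" for j using r[rule_format, of j] by linarith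
    define D where "D j = smult (1 / M (r j)) (P (r j))" for j
    have cD: "coeff (D j) i = coeff (P (r j)) i / M (r j)" for j i unfolding D_def by simp
    have cDb: "\<bar>coeff (D j) i\<bar> \<le> 1" for j i
    proof (cases "i \<le> N")
      case True
      have a: "\<bar>coeff (P (r j)) i / M (r j)\<bar> = \<bar>coeff (P (r j)) i\<bar> / M (r j)"
        using Mpos[of j] by simp
      have "\<bar>coeff (P (r j)) i\<bar> / M (r j) \<le> M (r j) / M (r j)"
        by (rule divide_right_mono[OF Mge[of i "r j", OF True]]) (use Mpos[of j] in simp)
      thus ?thesis unfolding cD a using Mpos[of j] by simp
    next
      case False thus ?thesis unfolding cD using coeff0[of i "r j"] by simp
    qed
    have degD: "degree (D j) \<le> N" for j unfolding D_def using deg[of "r j"] by simp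
    obtain s l where s: "strict_mono s" "\<forall>i<Suc N. (\<lambda>k. coeff (D (s k)) i) \<longlonglongrightarrow> l i"
      using extract_sub[of "\<lambda>j i. coeff (D j) i", OF cDb] by blast
    have sl: "(\<lambda>k. coeff (D (s k)) i) \<longlonglongrightarrow> l i" if "i \<le> N" for i using s(2) that by auto
    have sum1: "(\<Sum>i\<le>N. \<bar>coeff (D j) i\<bar>) = 1" for j
    proof -
      have "(\<Sum>i\<le>N. \<bar>coeff (D j) i\<bar>) = (\<Sum>i\<le>N. \<bar>coeff (P (r j)) i\<bar> / M (r j))"
        unfolding cD using Mpos[of j] by simp
      also have "\<dots> = M (r j) / M (r j)" by (simp only: M_def sum_divide_distrib)
      finally show ?thesis using Mpos[of j] by simp
    qed
    have "(\<lambda>k. \<Sum>i\<le>N. \<bar>coeff (D (s k)) i\<bar>) \<longlonglongrightarrow> (\<Sum>i\<le>N. \<bar>l i\<bar>)"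
      by (intro tendsto_sum tendsto_rabs) (use sl in auto)
    hence "(\<lambda>k. 1::real) \<longlonglongrightarrow> (\<Sum>i\<le>N. \<bar>l i\<bar>)" using sum1 by simp
    hence suml: "(\<Sum>i\<le>N. \<bar>l i\<bar>) = 1" using LIMSEQ_unique[OF tendsto_const] by metis
    define Q where "Q = polyN N l"
    have Qlim: "(\<lambda>k. poly (D (s k)) t) \<longlonglongrightarrow> poly Q t" for t
      unfolding Q_def by (rule lim_poly[OF degD sl])
    have Qnz: "Q \<noteq> 0"
    proof
      assume "Q = 0"
      hence "l i = 0" if "i \<le> N" for i using coeff_polyN[OF that, of l] unfolding Q_def by simp
      hence "(\<Sum>i\<le>N. \<bar>l i\<bar>) = 0" by simp
      thus False using suml by simp
    qed
    have rs: "strict_mono (r \<circ> s)" using rmono s(1) by (rule strict_mono_o)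
    have Mtop: "filterlim (\<lambda>k. M (r (s k))) at_top sequentially"
    proof (rule filterlim_at_top_mono[OF filterlim_real_sequentially])
      show "\<forall>\<^sub>F x in sequentially. real x \<le> M (r (s x))"
      proof (rule always_eventually, rule allI)
        fix x
        have "real x \<le> real (s x)" using seq_suble[OF s(1)] by simp
        also have "\<dots> < M (r (s x))" using r by blast
        finally show "real x \<le> M (r (s x))" by simp
      qed
    qed
    have inv0: "(\<lambda>k. c * inverse (M (r (s k)))) \<longlonglongrightarrow> 0" for c
      using tendsto_mult_right_zero[OF tendsto_inverse_0_at_top[OF Mtop], of c] by simp
    have pD: "poly (D j) t = poly (P (r j)) t * inverse (M (r j))" for j t
      unfolding D_def by (simp add: divide_inverse mult.commute)
    have "degree Q \<le> N" unfolding Q_def by (rule degree_polyN)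
    moreover have "\<forall>z\<in>Z0. poly Q z = 0"
    proof
      fix z assume z: "z \<in> Z0"
      have "(\<lambda>k. poly (D (s k)) z) = (\<lambda>k. f z * inverse (M (r (s k))))"
        unfolding pD using eq[OF z] by simp
      hence "(\<lambda>k. poly (D (s k)) z) \<longlonglongrightarrow> 0" using inv0 by simp
      thus "poly Q z = 0" using Qlim LIMSEQ_unique by blast
    qed
    moreover have "\<forall>t\<in>T. poly Q t \<le> 0"
    proof
      fix t assume t: "t \<in> T"
      have ev: "eventually (\<lambda>k. poly (P ((r \<circ> s) k)) t \<le> f t) sequentially"
        by (rule eventually_subseq[OF rs le[OF t]])
      have "eventually (\<lambda>k. poly (D (s k)) t \<le> f t * inverse (M (r (s k)))) sequentially"
        using ev
      proof (rule eventually_mono)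
        fix k assume "poly (P ((r \<circ> s) k)) t \<le> f t"
        thus "poly (D (s k)) t \<le> f t * inverse (M (r (s k)))"
          unfolding pD using Mpos[of "s k"] by (simp add: mult_right_mono)
      qed
      thus "poly Q t \<le> 0" using tendsto_le[OF trivial_limit_sequentially inv0 Qlim] by blast
    qed
    ultimately have "Q = 0" by (rule uniq)
    thus False using Qnz by simp
  qed
  then obtain B where B: "\<forall>k. M k \<le> B" by blast
  have cb: "\<bar>coeff (P k) i\<bar> \<le> B" for k i
  proof (cases "i \<le> N")
    case True thus ?thesis using Mge[OF True, of k] B by (meson order.trans)
  next
    case False
    have "0 \<le> M k" unfolding M_def by (simp add: sum_nonneg)
    thus ?thesis using coeff0[of i k] False B by (metis abs_zero not_le order.trans)
  qed
  obtain s l where s: "strict_mono s" "\<forall>i<Suc N. (\<lambda>k. coeff (P (s k)) i) \<longlonglongrightarrow> l i"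
    using extract_sub[of "\<lambda>j i. coeff (P j) i", OF cb] by blast
  have sl: "(\<lambda>k. coeff (P (s k)) i) \<longlonglongrightarrow> l i" if "i \<le> N" for i using s(2) that by auto
  define Q where "Q = polyN N l"
  have Qlim: "(\<lambda>k. poly (P (s k)) t) \<longlonglongrightarrow> poly Q t" for t
    unfolding Q_def by (rule lim_poly[OF deg sl])
  have "degree Q \<le> N" unfolding Q_def by (rule degree_polyN)
  moreover have "\<forall>z\<in>Z0. poly Q z = f z"
  proof
    fix z assume z: "z \<in> Z0"
    have "(\<lambda>k. poly (P (s k)) z) \<longlonglongrightarrow> f z" using eq[OF z] by simp
    thus "poly Q z = f z" using Qlim LIMSEQ_unique by blast
  qed
  moreover have "\<forall>t\<in>T. poly Q t \<le> f t"
  proof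
    fix t assume t: "t \<in> T"
    have ev: "eventually (\<lambda>k. poly (P (s k)) t \<le> f t) sequentially"
      by (rule eventually_subseq[OF s(1) le[OF t]])
    show "poly Q t \<le> f t" using tendsto_le[OF trivial_limit_sequentially tendsto_const Qlim ev] .
  qed
  ultimately show ?thesis by blast
qed



lemma uniq_lemma:
  fixes q :: "real poly"
  assumes Y: "finite Y" "card Y = n" "Y \<subseteq> {a<..<b}"
    and deg: "degree q \<le> 2 * n"
    and za: "poly q a = 0" and zY: "\<forall>y\<in>Y. poly q y = 0"
    and le: "\<forall>t\<in>{a..b}. poly q t \<le> 0"
  shows "q = 0"
proof (rule ccontr)
  assume qnz: "q \<noteq> 0"
  have pnz: "pderiv q \<noteq> 0"
  proof
    assume "pderiv q = 0"
    hence d0: "degree q = 0" by (simp add: pderiv_eq_0_iff)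
    have "poly q a = coeff q 0" using poly_altdef[of q a] d0 by simp
    hence c0: "coeff q 0 = 0" using za by simp
    have "q = 0"
    proof (rule poly_eqI)
      fix i show "coeff q i = coeff 0 i"
        using c0 d0 coeff_eq_0[of q i] by (cases i) auto
    qed
    thus False using qnz by simp
  qed
  have ord2: "order y q \<ge> 2" if y: "y \<in> Y" for y
  proof -
    have ya: "a < y" "y < b" using y Y(3) by auto
    have "poly (pderiv q) y = 0"
    proof (rule DERIV_local_max[OF poly_DERIV])
      show "0 < min (y - a) (b - y)" using ya by simp
      show "\<forall>t. \<bar>y - t\<bar> < min (y - a) (b - y) \<longrightarrow> poly q t \<le> poly q y"
      proof (intro allI impI)
        fix t assume "\<bar>y - t\<bar> < min (y - a) (b - y)"
        hence "t \<in> {a..b}" by (auto simp: abs_if split: if_splits)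
        thus "poly q t \<le> poly q y" using le zY y by auto
      qed
    qed
    hence "order y (pderiv q) \<noteq> 0" using pnz order_root by blast
    moreover have "order y q = Suc (order y (pderiv q))"
      by (rule order_pderiv[OF qnz]) (use zY y in auto)
    ultimately show ?thesis by simp
  qed
  have orda: "order a q \<ge> 1" using za qnz order_root by (metis less_one not_le)
  have aY: "a \<notin> Y" using Y(3) by auto
  have "2 * n + 1 \<le> order a q + (\<Sum>y\<in>Y. order y q)"
  proof -
    have "(\<Sum>y\<in>Y. 2) \<le> (\<Sum>y\<in>Y. order y q)" by (rule sum_mono) (use ord2 in auto)
    thus ?thesis using Y(2) orda by simp
  qed
  also have "\<dots> = (\<Sum>y\<in>insert a Y. order y q)" using Y(1) aY by simp
  also have "\<dots> \<le> (\<Sum>y | poly q y = 0. order y q)"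
    by (rule sum_mono2[OF poly_roots_finite[OF qnz]]) (use za zY in auto)
  also have "\<dots> \<le> degree q" by (rule sum_order_le_degree[OF qnz])
  finally show False using deg by simp
qed

lemma pos_lower:
  fixes g :: "'a \<Rightarrow> real"
  assumes "finite S" "\<forall>p\<in>S. 0 < g p"
  shows "\<exists>\<delta>>0. \<forall>p\<in>S. \<delta> \<le> g p"
proof (cases "S = {}")
  case True thus ?thesis by (intro exI[of _ 1]) auto
next
  case False
  show ?thesis
  proof (intro exI conjI)
    show "0 < Min (g ` S)" using assms False by simp
    show "\<forall>p\<in>S. Min (g ` S) \<le> g p" using assms by simp
  qed
qed



lemma prod_sign:
  fixes Y :: "real set"
  assumes Y: "finite Y" "a \<notin> Y \<union> (\<lambda>y. y + e) ` Y" "Y \<inter> (\<lambda>y. y + e) ` Y = {}"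
    and t: "a \<le> t" "\<forall>y\<in>Y. \<not> (y < t \<and> t < y + e)" and e: "0 < e"
  shows "0 \<le> (\<Prod>v\<in>insert a (Y \<union> (\<lambda>y. y + e) ` Y). t - v)"
proof -
  have inj: "inj_on (\<lambda>y. y + e) Y" by (auto simp: inj_on_def)
  have "(\<Prod>v\<in>insert a (Y \<union> (\<lambda>y. y + e) ` Y). t - v)
      = (t - a) * ((\<Prod>v\<in>Y. t - v) * (\<Prod>v\<in>(\<lambda>y. y + e) ` Y. t - v))"
    using Y by (simp add: prod.union_disjoint)
  also have "(\<Prod>v\<in>(\<lambda>y. y + e) ` Y. t - v) = (\<Prod>y\<in>Y. t - (y + e))"
    using prod.reindex[OF inj] by simp
  also have "(\<Prod>v\<in>Y. t - v) * (\<Prod>y\<in>Y. t - (y + e)) = (\<Prod>y\<in>Y. (t - y) * (t - (y + e)))"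
    by (simp add: prod.distrib)
  finally have eq: "(\<Prod>v\<in>insert a (Y \<union> (\<lambda>y. y + e) ` Y). t - v) = (t - a) * (\<Prod>y\<in>Y. (t - y) * (t - (y + e)))" .
  have "0 \<le> (\<Prod>y\<in>Y. (t - y) * (t - (y + e)))"
  proof (rule prod_nonneg)
    fix y assume y: "y \<in> Y"
    show "0 \<le> (t - y) * (t - (y + e))"
    proof (cases "t \<le> y")
      case True
      hence "t - y \<le> 0" "t - (y + e) \<le> 0" using e by auto
      thus ?thesis by (rule mult_nonpos_nonpos)
    next
      case False
      hence "y + e \<le> t" using t(2) y by auto
      hence "0 \<le> t - y" "0 \<le> t - (y + e)" using e by auto
      thus ?thesis by simp
    qed
  qed
  thus ?thesis unfolding eq using t(1) by simp
qed

theorem corollary4: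
  fixes n :: nat and a b :: real and f :: "real \<Rightarrow> real" and x :: "nat \<Rightarrow> real"
  assumes "a < b"
    and "m_convex (2 * n) {a..b} f"
    and "x 1 = a"
    and "\<And>i. 2 \<le> i \<Longrightarrow> i \<le> n + 1 \<Longrightarrow> x i \<in> {a<..<b}"
  shows "\<exists>p :: real poly. degree p \<le> 2 * n \<and>
           (\<forall>i\<in>{1..n+1}. poly p (x i) = f (x i)) \<and>
           (\<forall>t\<in>{a..b}. poly p t \<le> f t)"
proof -
  note ab = assms(1) and conv = assms(2) and x1 = assms(3) and xi = assms(4)
  define X where "X = x ` {2..n+1}"
  have Xsub: "X \<subseteq> {a<..<b}" unfolding X_def using xi by auto
  have Xfin: "finite X" unfolding X_def by simp
  have Xcard: "card X \<le> n" unfolding X_def using card_image_le[of "{2..n+1}" x] by simp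
  have "infinite ({a<..<b} - X)" using ab Xfin by (simp add: infinite_Ioo)
  then obtain F where F: "finite F" "card F = n - card X" "F \<subseteq> {a<..<b} - X"
    using infinite_arbitrarily_large by blast
  define Y where "Y = X \<union> F"
  have Yfin: "finite Y" unfolding Y_def using Xfin F by simp
  have Ycard: "card Y = n" unfolding Y_def using card_Un_disjoint[OF Xfin F(1)] F Xcard by auto
  have Ysub: "Y \<subseteq> {a<..<b}" unfolding Y_def using Xsub F by auto
  have XY: "X \<subseteq> Y" unfolding Y_def by simp
  have aY: "a \<notin> Y" using Ysub by auto
  define S1 where "S1 = {p \<in> Y \<times> Y. fst p < snd p}"
  have "finite S1" unfolding S1_def using Yfin by simp
  then obtain d1 where d1: "d1 > 0" "\<forall>p\<in>S1. d1 \<le> snd p - fst p"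
    using pos_lower[of S1 "\<lambda>p. snd p - fst p"] unfolding S1_def by auto
  have Yb: "\<forall>y\<in>Y. 0 < b - y" using Ysub by auto
  obtain d2 where d2: "d2 > 0" "\<forall>y\<in>Y. d2 \<le> b - y"
    using pos_lower[OF Yfin Yb] by blast
  define \<delta> where "\<delta> = min d1 d2"
  have dpos: "\<delta> > 0" unfolding \<delta>_def using d1 d2 by simp
  define \<epsilon> where "\<epsilon> k = \<delta> / (real k + 2)" for k :: nat
  have epos: "\<epsilon> k > 0" for k unfolding \<epsilon>_def using dpos by simp
  have elt: "\<epsilon> k < \<delta>" for k
  proof -
    have "\<delta> / (real k + 2) < \<delta> / 1" by (rule divide_strict_left_mono) (use dpos in auto)
    thus ?thesis unfolding \<epsilon>_def by simp
  qed
  have elim: "\<epsilon> \<longlonglongrightarrow> 0"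
  proof -
    have "filterlim (\<lambda>k. 2 + real k) at_top sequentially"
      by (rule filterlim_tendsto_add_at_top[OF tendsto_const filterlim_real_sequentially])
    hence "(\<lambda>k. \<delta> / (2 + real k)) \<longlonglongrightarrow> 0"
      by (rule real_tendsto_divide_at_top[OF tendsto_const])
    thus ?thesis unfolding \<epsilon>_def by (simp add: add.commute)
  qed
  define Z where "Z k = insert a (Y \<union> (\<lambda>y. y + \<epsilon> k) ` Y)" for k
  have Zfin: "finite (Z k)" for k unfolding Z_def using Yfin by simp
  have disj: "Y \<inter> (\<lambda>y. y + \<epsilon> k) ` Y = {}" for k
  proof (rule ccontr)
    assume "Y \<inter> (\<lambda>y. y + \<epsilon> k) ` Y \<noteq> {}"
    then obtain y y' where yy: "y \<in> Y" "y' \<in> Y" "y' = y + \<epsilon> k" by auto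
    hence "(y, y') \<in> S1" unfolding S1_def using epos[of k] by auto
    hence "d1 \<le> y' - y" using d1 by auto
    thus False using yy elt[of k] unfolding \<delta>_def by simp
  qed
  have Yab: "a < y" "y < b" if "y \<in> Y" for y using subsetD[OF Ysub that] by auto
  have aZ: "a \<notin> Y \<union> (\<lambda>y. y + \<epsilon> k) ` Y" for k
  proof -
    have "a \<noteq> y + \<epsilon> k" if "y \<in> Y" for y using Yab[OF that] epos[of k] by simp
    thus ?thesis using aY by auto
  qed
  have inj: "inj_on (\<lambda>y. y + \<epsilon> k) Y" for k by (auto simp: inj_on_def)
  have Zcard: "card (Z k) = 2 * n + 1" for k
  proof -
    have "card (Y \<union> (\<lambda>y. y + \<epsilon> k) ` Y) = card Y + card ((\<lambda>y. y + \<epsilon> k) ` Y)"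
      by (rule card_Un_disjoint) (use Yfin disj in auto)
    also have "card ((\<lambda>y. y + \<epsilon> k) ` Y) = card Y" by (rule card_image[OF inj])
    finally show ?thesis unfolding Z_def using aZ[of k] Yfin Ycard by simp
  qed
  have Zsub: "Z k \<subseteq> {a..b}" for k
  proof -
    have dd: "\<delta> \<le> d2" unfolding \<delta>_def by simp
    have yb: "y + \<epsilon> k \<le> b" if "y \<in> Y" for y
    proof -
      have "d2 \<le> b - y" using d2(2) that by blast
      thus ?thesis using dd elt[of k] by linarith
    qed
    show ?thesis
    proof
      fix v assume "v \<in> Z k"
      hence "v = a \<or> v \<in> Y \<or> (\<exists>y\<in>Y. v = y + \<epsilon> k)" unfolding Z_def by auto
      thus "v \<in> {a..b}"
      proof (elim disjE)
        assume "v = a" thus ?thesis using ab by simp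
      next
        assume "v \<in> Y" thus ?thesis using Yab[of v] by simp
      next
        assume "\<exists>y\<in>Y. v = y + \<epsilon> k"
        then obtain y where "y \<in> Y" "v = y + \<epsilon> k" by blast
        thus ?thesis using Yab[of y] yb[of y] epos[of k] by simp
      qed
    qed
  qed
  define P where "P k = lag (Z k) f" for k
  have degP: "degree (P k) \<le> 2 * n" for k
    unfolding P_def using degree_lag[OF Zfin, of k f] Zcard[of k] by simp
  have eqP: "poly (P k) z = f z" if "z \<in> insert a Y" for k z
    unfolding P_def by (rule lag_interp[OF Zfin]) (use that in \<open>auto simp: Z_def\<close>)
  have leP: "eventually (\<lambda>k. poly (P k) t \<le> f t) sequentially" if t: "t \<in> {a..b} - Y" for t
  proof -
    have "\<forall>y\<in>Y. eventually (\<lambda>k. \<not> (y < t \<and> t < y + \<epsilon> k)) sequentially"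
    proof
      fix y assume y: "y \<in> Y"
      show "eventually (\<lambda>k. \<not> (y < t \<and> t < y + \<epsilon> k)) sequentially"
      proof (cases "y < t")
        case True
        hence "eventually (\<lambda>k. \<epsilon> k < t - y) sequentially"
          using order_tendstoD(2)[OF elim] by simp
        thus ?thesis by (rule eventually_mono) auto
      next
        case False thus ?thesis by (intro always_eventually allI) simp
      qed
    qed
    hence "eventually (\<lambda>k. \<forall>y\<in>Y. \<not> (y < t \<and> t < y + \<epsilon> k)) sequentially"
      by (rule eventually_ball_finite[OF Yfin])
    thus ?thesis
    proof (rule eventually_mono)
      fix k assume sep: "\<forall>y\<in>Y. \<not> (y < t \<and> t < y + \<epsilon> k)"
      show "poly (P k) t \<le> f t"
      proof (cases "t \<in> Z k")
        case True thus ?thesis unfolding P_def using lag_interp[OF Zfin True] by simp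
      next
        case False
        have err: "f t - poly (P k) t = DF f (insert t (Z k)) * (\<Prod>v\<in>Z k. t - v)"
          unfolding P_def by (rule lag_error[OF Zfin False])
        have "DF f (insert t (Z k)) \<ge> 0"
        proof (rule convex_DF[OF conv])
          show "finite (insert t (Z k))" using Zfin by simp
          show "card (insert t (Z k)) = 2 * n + 2" using Zfin False Zcard[of k] by simp
          show "insert t (Z k) \<subseteq> {a..b}" using Zsub t by auto
        qed
        moreover have "0 \<le> (\<Prod>v\<in>Z k. t - v)"
        proof -
          have "a \<le> t" using t by simp
          thus ?thesis unfolding Z_def by (rule prod_sign[OF Yfin aZ disj _ sep epos])
        qed
        ultimately have "0 \<le> f t - poly (P k) t" unfolding err by simp
        thus ?thesis by simp
      qed
    qed
  qed
  have uniqP: "q = 0" if "degree q \<le> 2 * n" "\<forall>z\<in>insert a Y. poly q z = 0"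
      "\<forall>t\<in>{a..b} - Y. poly q t \<le> 0" for q
  proof (rule uniq_lemma[OF Yfin Ycard Ysub that(1)])
    show "poly q a = 0" "\<forall>y\<in>Y. poly q y = 0" using that(2) by auto
    show "\<forall>t\<in>{a..b}. poly q t \<le> 0"
    proof
      fix t assume "t \<in> {a..b}"
      thus "poly q t \<le> 0" using that(2,3) by (cases "t \<in> Y") auto
    qed
  qed
  obtain q where q: "degree q \<le> 2 * n" "\<forall>z\<in>insert a Y. poly q z = f z" "\<forall>t\<in>{a..b} - Y. poly q t \<le> f t"
    using limit_poly[of P "2 * n" "insert a Y" f "{a..b} - Y", OF degP eqP leP uniqP] by blast
  show ?thesis
  proof (intro exI conjI ballI)
    show "degree q \<le> 2 * n" by (rule q(1))
  next
    fix i assume i: "i \<in> {1..n+1}"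
    show "poly q (x i) = f (x i)"
    proof (cases "i = 1")
      case True thus ?thesis using q(2) x1 by simp
    next
      case False
      hence "x i \<in> X" unfolding X_def using i by auto
      thus ?thesis using q(2) XY by auto
    qed
  next
    fix t assume t: "t \<in> {a..b}"
    show "poly q t \<le> f t" using q(2,3) t by (cases "t \<in> Y") auto
  qed
qed


end
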